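(* Let $G=(V,E)$ be a network, $s,t\in V$, and $S\in[S_{min},1]$. Every optimal solution $(\pi_1,\pi_2)$ of the CO-Constrained Survivability Min-QoS problem with bound $S$ is such that all its disjoint segments are shortest disjoint segments.
   Context: A network is a directed graph $G=(V,E)$ with $M=|E|$. Each link $e$ has failure probability $p_e\in(0,p_{max}]$ with $p_{max}<1$, and positive weight $w_e$. Let $S_{min}=(1-p_{max})^M$. Paths are identified with link sets. A survivable connection is a pair $(\pi_1,\pi_2)$ of simple $s$–$t$ paths; the two paths may coincide. Its survivability level is $\prod_{e\in\pi_1\cap\pi_2}(1-p_e)$, equal to $1$ if empty. Its CO-weight is $\sum_{e\in\pi_1\cup\pi_2}w_e$. CO-CSMQ problem: minimize CO-weight subject to survivability level $\ge S$. A survivable connection is viewed as a concatenation of alternating segments: - common segments consist of links common to $\pi_1$ and $\pi_2$; - disjoint segments consist of links exclusive to one of the paths. A disjoint segment with head node $u$ and tail node $v$ is the pair formed by the subpath of $\pi_1$ from $u$ to $v$ and the subpath of $\pi_2$ from $u$ to $v$, which are link-disjoint. The weight of a disjoint segment is the total weight of its links. It is a shortest disjoint segment if its weight is minimum among all pairs of link-disjoint paths from $u$ to $v$ in $G$. *)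

theory Defs
  imports Complex_Main
begin

definition network ::
  "'v set \<Rightarrow> ('v \<times> 'v) set \<Rightarrow> ('v \<times> 'v \<Rightarrow> real) \<Rightarrow> ('v \<times> 'v \<Rightarrow> real) \<Rightarrow> real \<Rightarrow> bool" where
  "network V E p w pmax \<longleftrightarrow> finite V \<and> E \<subseteq> V \<times> V \<and> pmax < 1 \<and>
     (\<forall>e\<in>E. 0 < p e \<and> p e \<le> pmax) \<and> (\<forall>e\<in>E. 0 < w e)"

definition S_min :: "('v \<times> 'v) set \<Rightarrow> real \<Rightarrow> real" where
  "S_min E pmax = (1 - pmax) ^ card E"

definition links :: "'v list \<Rightarrow> ('v \<times> 'v) set" where
  "links xs = set (zip xs (tl xs))"

definition is_path :: "('v \<times> 'v) set \<Rightarrow> 'v \<Rightarrow> 'v \<Rightarrow> 'v list \<Rightarrow> bool" where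
  "is_path E u v xs \<longleftrightarrow> xs \<noteq> [] \<and> hd xs = u \<and> last xs = v \<and> distinct xs \<and> links xs \<subseteq> E"

definition surv_level :: "('v \<times> 'v \<Rightarrow> real) \<Rightarrow> 'v list \<Rightarrow> 'v list \<Rightarrow> real" where
  "surv_level p xs ys = (\<Prod>e\<in>links xs \<inter> links ys. 1 - p e)"

definition co_weight :: "('v \<times> 'v \<Rightarrow> real) \<Rightarrow> 'v list \<Rightarrow> 'v list \<Rightarrow> real" where
  "co_weight w xs ys = (\<Sum>e\<in>links xs \<union> links ys. w e)"

definition co_feasible ::
  "('v \<times> 'v) set \<Rightarrow> ('v \<times> 'v \<Rightarrow> real) \<Rightarrow> 'v \<Rightarrow> 'v \<Rightarrow> real \<Rightarrow> 'v list \<Rightarrow> 'v list \<Rightarrow> bool" where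
  "co_feasible E p s t S xs ys \<longleftrightarrow> is_path E s t xs \<and> is_path E s t ys \<and> S \<le> surv_level p xs ys"

definition co_optimal ::
  "('v \<times> 'v) set \<Rightarrow> ('v \<times> 'v \<Rightarrow> real) \<Rightarrow> ('v \<times> 'v \<Rightarrow> real) \<Rightarrow> 'v \<Rightarrow> 'v \<Rightarrow> real \<Rightarrow> 'v list \<Rightarrow> 'v list \<Rightarrow> bool" where
  "co_optimal E p w s t S xs ys \<longleftrightarrow> co_feasible E p s t S xs ys \<and>
     (\<forall>xs' ys'. co_feasible E p s t S xs' ys' \<longrightarrow> co_weight w xs ys \<le> co_weight w xs' ys')"

definition subpath :: "'v list \<Rightarrow> nat \<Rightarrow> nat \<Rightarrow> 'v list" where
  "subpath xs i j = take (Suc j - i) (drop i xs)"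

text \<open>Disjoint segment of (xs, ys): head u = xs!i = ys!k, tail v = xs!j = ys!l, the two
  subpaths consist only of links exclusive to their path, and the segment is maximal, i.e.
  it is delimited on each side either by s / t or by a common link (the alternating
  decomposition into common and disjoint segments).\<close>
definition is_disjoint_segment :: "'v list \<Rightarrow> 'v list \<Rightarrow> nat \<Rightarrow> nat \<Rightarrow> nat \<Rightarrow> nat \<Rightarrow> bool" where
  "is_disjoint_segment xs ys i j k l \<longleftrightarrow>
     i < j \<and> j < length xs \<and> k < l \<and> l < length ys \<and>
     xs ! i = ys ! k \<and> xs ! j = ys ! l \<and>
     links (subpath xs i j) \<inter> links ys = {} \<and>
     links (subpath ys k l) \<inter> links xs = {} \<and>
     (i = 0 \<or> (xs ! (i - 1), xs ! i) \<in> links ys) \<and>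
     (k = 0 \<or> (ys ! (k - 1), ys ! k) \<in> links xs) \<and>
     (Suc j = length xs \<or> (xs ! j, xs ! Suc j) \<in> links ys) \<and>
     (Suc l = length ys \<or> (ys ! l, ys ! Suc l) \<in> links xs)"

definition shortest_disjoint_segment ::
  "('v \<times> 'v) set \<Rightarrow> ('v \<times> 'v \<Rightarrow> real) \<Rightarrow> 'v \<Rightarrow> 'v \<Rightarrow> 'v list \<Rightarrow> 'v list \<Rightarrow> bool" where
  "shortest_disjoint_segment E w u v P1 P2 \<longleftrightarrow>
     (\<forall>Q1 Q2. is_path E u v Q1 \<and> is_path E u v Q2 \<and> links Q1 \<inter> links Q2 = {} \<longrightarrow>
        (\<Sum>e\<in>links P1 \<union> links P2. w e) \<le> (\<Sum>e\<in>links Q1 \<union> links Q2. w e))"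

end

theory Submission
  imports Defs
begin

fun ewalk :: "'e set \<Rightarrow> ('e \<Rightarrow> 'v) \<Rightarrow> ('e \<Rightarrow> 'v) \<Rightarrow> 'v \<Rightarrow> 'v \<Rightarrow> 'e list \<Rightarrow> bool" where
  "ewalk F src dst a b [] = (a = b)"
| "ewalk F src dst a b (g # gs) = (g \<in> F \<and> src g = a \<and> ewalk F src dst (dst g) b gs)"

definition outs :: "'e set \<Rightarrow> ('e \<Rightarrow> 'v) \<Rightarrow> ('e \<Rightarrow> 'v) \<Rightarrow> 'v set \<Rightarrow> 'e set" where
  "outs F src dst X = {g\<in>F. src g \<in> X \<and> dst g \<notin> X}"

definition cutc :: "'e set \<Rightarrow> ('e \<Rightarrow> 'v) \<Rightarrow> ('e \<Rightarrow> 'v) \<Rightarrow> 'v \<Rightarrow> 'v \<Rightarrow> bool" where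
  "cutc F src dst s t \<longleftrightarrow> (\<forall>X. s \<in> X \<and> t \<notin> X \<longrightarrow> 2 \<le> card (outs F src dst X))"

lemma ewalk_mono: "ewalk F src dst a b W \<Longrightarrow> F \<subseteq> G \<Longrightarrow> ewalk G src dst a b W"
  by (induction W arbitrary: a) auto

lemma ewalk_append: "ewalk F src dst a m V \<Longrightarrow> ewalk F src dst m b U \<Longrightarrow> ewalk F src dst a b (V @ U)"
  by (induction V arbitrary: a) auto

lemma ewalk_set: "ewalk F src dst a b W \<Longrightarrow> set W \<subseteq> F"
  by (induction W arbitrary: a) auto

lemma dec1:
  assumes "a \<in> X" "t \<notin> X" "\<forall>g\<in>Ob. src g \<in> X"
    and "ewalk ({g\<in>F. src g \<in> X \<and> dst g \<in> X} \<union> Ob) src (\<lambda>g. if g \<in> Ob then t else dst g) a t W"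
  shows "\<exists>V o'. W = V @ [o'] \<and> o' \<in> Ob \<and> ewalk {g\<in>F. src g \<in> X \<and> dst g \<in> X} src dst a (src o') V"
  using assms
proof (induction W arbitrary: a)
  case Nil
  then show ?case by auto
next
  case (Cons g W)
  show ?case
  proof (cases "g \<in> Ob")
    case True
    with Cons.prems have "ewalk ({g\<in>F. src g \<in> X \<and> dst g \<in> X} \<union> Ob) src (\<lambda>g. if g \<in> Ob then t else dst g) t t W" by auto
    have "W = []"
    proof (cases W)
      case (Cons h W')
      with \<open>ewalk _ _ _ t t W\<close> have "src h = t" "h \<in> {g\<in>F. src g \<in> X \<and> dst g \<in> X} \<union> Ob" by auto
      with Cons.prems show ?thesis by auto
    qed
    with True Cons.prems show ?thesis by auto
  next
    case False
    with Cons.prems have g: "g \<in> F" "src g = a" "dst g \<in> X"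
      and r: "ewalk ({g\<in>F. src g \<in> X \<and> dst g \<in> X} \<union> Ob) src (\<lambda>g. if g \<in> Ob then t else dst g) (dst g) t W" by auto
    from Cons.IH[OF g(3) Cons.prems(2,3) r] obtain V o' where
      "W = V @ [o']" "o' \<in> Ob" "ewalk {g\<in>F. src g \<in> X \<and> dst g \<in> X} src dst (dst g) (src o') V" by blast
    then show ?thesis using g Cons.prems(1) by (intro exI[of _ "g # V"] exI[of _ o']) auto
  qed
qed

lemma dec2:
  assumes "a \<notin> X" "s \<in> X"
    and "ewalk ({g\<in>F. src g \<notin> X \<and> dst g \<notin> X} \<union> Ob) (\<lambda>g. if g \<in> Ob then s else src g) dst a t W"
  shows "ewalk {g\<in>F. src g \<notin> X \<and> dst g \<notin> X} src dst a t W"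
  using assms
proof (induction W arbitrary: a)
  case Nil
  then show ?case by auto
next
  case (Cons g W)
  then show ?case by (auto split: if_splits)
qed


lemma two_elems: "2 \<le> card A \<Longrightarrow> \<exists>a b. a \<in> A \<and> b \<in> A \<and> a \<noteq> b"
proof -
  assume c: "2 \<le> card A"
  then have "finite A" "A \<noteq> {}" by (auto intro: card_ge_0_finite)
  then obtain a where a: "a \<in> A" by blast
  have "card (A - {a}) \<ge> 1" using c a \<open>finite A\<close> by (simp add: card_Diff_singleton)
  then obtain b where "b \<in> A - {a}" by (metis card.empty all_not_in_conv not_one_le_zero)
  then show ?thesis using a by blast
qed

lemma card_le1: "A \<subseteq> {f} \<Longrightarrow> card A < 2"
proof -
  assume "A \<subseteq> {f}"
  then have "card A \<le> card {f}" by (intro card_mono) auto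
  then show ?thesis by simp
qed

lemma crit:
  assumes "finite F" "cutc F src dst s t" "e \<in> F" "\<not> cutc (F - {e}) src dst s t"
  shows "\<exists>X f. s \<in> X \<and> t \<notin> X \<and> f \<noteq> e \<and> outs F src dst X = {e, f}"
proof -
  from assms(4) obtain X where X: "s \<in> X" "t \<notin> X" "card (outs (F - {e}) src dst X) < 2"
    unfolding cutc_def by auto
  have eq: "outs (F - {e}) src dst X = outs F src dst X - {e}" unfolding outs_def by auto
  have c2: "2 \<le> card (outs F src dst X)" using assms(2) X unfolding cutc_def by auto
  have fin: "finite (outs F src dst X)" using assms(1) unfolding outs_def by auto
  have ein: "e \<in> outs F src dst X"
  proof (rule ccontr)
    assume "e \<notin> outs F src dst X"
    then have "outs F src dst X - {e} = outs F src dst X" by auto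
    with X(3) eq c2 show False by auto
  qed
  have "card (outs F src dst X - {e}) = card (outs F src dst X) - 1"
    using ein fin by (simp add: card_Diff_singleton)
  with X(3) eq c2 have "card (outs F src dst X) = 2" by auto
  then obtain a b where ab: "a \<noteq> b" "outs F src dst X = {a, b}" by (auto simp: card_2_iff)
  show ?thesis
  proof (cases "a = e")
    case True
    then show ?thesis using ab X by (intro exI[of _ X] exI[of _ b]) auto
  next
    case False
    then have "b = e" using ab ein by auto
    then show ?thesis using ab X False by (intro exI[of _ X] exI[of _ a]) auto
  qed
qed

lemma dec2':
  assumes "s \<in> X" "\<forall>g\<in>Ob. dst g \<notin> X"
    and "ewalk ({g\<in>F. src g \<notin> X \<and> dst g \<notin> X} \<union> Ob) (\<lambda>g. if g \<in> Ob then s else src g) dst s t U"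
    and "s \<noteq> t"
  shows "\<exists>h U'. U = h # U' \<and> h \<in> Ob \<and> ewalk {g\<in>F. src g \<notin> X \<and> dst g \<notin> X} src dst (dst h) t U'"
proof (cases U)
  case Nil
  then show ?thesis using assms by auto
next
  case (Cons h U')
  with assms have h: "h \<in> Ob"
    by (auto split: if_splits)
  with Cons assms have "ewalk ({g\<in>F. src g \<notin> X \<and> dst g \<notin> X} \<union> Ob) (\<lambda>g. if g \<in> Ob then s else src g) dst (dst h) t U'"
    by auto
  from dec2[OF _ assms(1) this] h assms(2) have "ewalk {g\<in>F. src g \<notin> X \<and> dst g \<notin> X} src dst (dst h) t U'" by auto
  then show ?thesis using Cons h by auto
qed

lemma comb:
  "ewalk Fi src dst s (src o') V \<Longrightarrow> o' \<in> F \<Longrightarrow> ewalk Fo src dst (dst o') t U \<Longrightarrow> Fi \<subseteq> F \<Longrightarrow> Fo \<subseteq> F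
   \<Longrightarrow> ewalk F src dst s t (V @ o' # U)"
  by (rule ewalk_append) (auto intro: ewalk_mono)

lemma split_case:
  fixes F :: "'e set" and src dst :: "'e \<Rightarrow> 'v"
  assumes fin: "finite F" and cc: "cutc F src dst s t" and st: "s \<noteq> t"
    and X: "s \<in> X" "t \<notin> X" and Oeq: "outs F src dst X = {e, f}"
    and g1: "g1 \<in> F" "src g1 \<notin> X" and g2: "g2 \<in> F" "dst g2 \<in> X"
    and IH: "\<And>(F' :: 'e set) (src' :: 'e \<Rightarrow> 'v) dst'. card F' < card F \<Longrightarrow> finite F' \<Longrightarrow> cutc F' src' dst' s t \<Longrightarrow>
        \<exists>W1 W2. ewalk F' src' dst' s t W1 \<and> ewalk F' src' dst' s t W2 \<and> set W1 \<inter> set W2 = {}"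
  shows "\<exists>W1 W2. ewalk F src dst s t W1 \<and> ewalk F src dst s t W2 \<and> set W1 \<inter> set W2 = {}"
proof -
  define Ob where "Ob = {e, f}"
  define Fi where "Fi = {g\<in>F. src g \<in> X \<and> dst g \<in> X}"
  define Fo where "Fo = {g\<in>F. src g \<notin> X \<and> dst g \<notin> X}"
  define dst1 where "dst1 = (\<lambda>g. if g \<in> Ob then t else dst g)"
  define src2 where "src2 = (\<lambda>g. if g \<in> Ob then s else src g)"
  have Obo: "Ob = outs F src dst X" using Oeq Ob_def by simp
  have ObF: "Ob \<subseteq> F" and Obs: "\<forall>g\<in>Ob. src g \<in> X" and Obd: "\<forall>g\<in>Ob. dst g \<notin> X"
    using Obo unfolding outs_def by auto
  have sub1: "Fi \<union> Ob \<subseteq> F" "Fo \<union> Ob \<subseteq> F" using ObF unfolding Fi_def Fo_def by auto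
  have c1: "card (Fi \<union> Ob) < card F"
    by (rule psubset_card_mono[OF fin]) (use sub1 g1 Obs in \<open>auto simp: Fi_def\<close>)
  have c2: "card (Fo \<union> Ob) < card F"
    by (rule psubset_card_mono[OF fin]) (use sub1 g2 Obd in \<open>auto simp: Fo_def\<close>)
  have fin1: "finite (Fi \<union> Ob)" "finite (Fo \<union> Ob)" using sub1 fin finite_subset by auto
  have cut1: "cutc (Fi \<union> Ob) src dst1 s t"
    unfolding cutc_def
  proof (intro allI impI)
    fix Y assume Y: "s \<in> Y \<and> t \<notin> Y"
    have "outs F src dst (Y \<inter> X) \<subseteq> outs (Fi \<union> Ob) src dst1 Y"
    proof
      fix g assume g: "g \<in> outs F src dst (Y \<inter> X)"
      show "g \<in> outs (Fi \<union> Ob) src dst1 Y"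
      proof (cases "dst g \<in> X")
        case True
        then have "g \<notin> Ob" using Obd by auto
        then show ?thesis using g True unfolding outs_def Fi_def dst1_def by auto
      next
        case False
        then have "g \<in> Ob" using g Obo unfolding outs_def by auto
        then show ?thesis using g Y unfolding outs_def dst1_def by auto
      qed
    qed
    moreover have "2 \<le> card (outs F src dst (Y \<inter> X))" using cc Y X unfolding cutc_def by auto
    moreover have "finite (outs (Fi \<union> Ob) src dst1 Y)" using fin1 unfolding outs_def by auto
    ultimately show "2 \<le> card (outs (Fi \<union> Ob) src dst1 Y)" by (meson card_mono order_trans)
  qed
  have cut2: "cutc (Fo \<union> Ob) src2 dst s t"
    unfolding cutc_def
  proof (intro allI impI)
    fix Y assume Y: "s \<in> Y \<and> t \<notin> Y"
    have "outs F src dst (X \<union> Y) \<subseteq> outs (Fo \<union> Ob) src2 dst Y"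
    proof
      fix g assume g: "g \<in> outs F src dst (X \<union> Y)"
      show "g \<in> outs (Fo \<union> Ob) src2 dst Y"
      proof (cases "src g \<in> X")
        case True
        then have "g \<in> Ob" using g Obo unfolding outs_def by auto
        then show ?thesis using g Y unfolding outs_def src2_def by auto
      next
        case False
        then have "g \<notin> Ob" using Obs by auto
        then show ?thesis using g False unfolding outs_def Fo_def src2_def by auto
      qed
    qed
    moreover have "2 \<le> card (outs F src dst (X \<union> Y))" using cc Y X unfolding cutc_def by auto
    moreover have "finite (outs (Fo \<union> Ob) src2 dst Y)" using fin1 unfolding outs_def by auto
    ultimately show "2 \<le> card (outs (Fo \<union> Ob) src2 dst Y)" by (meson card_mono order_trans)
  qed
  obtain W1 W2 where W: "ewalk (Fi \<union> Ob) src dst1 s t W1" "ewalk (Fi \<union> Ob) src dst1 s t W2"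
    "set W1 \<inter> set W2 = {}" using IH[OF c1 fin1(1) cut1] by blast
  obtain U1 U2 where U: "ewalk (Fo \<union> Ob) src2 dst s t U1" "ewalk (Fo \<union> Ob) src2 dst s t U2"
    "set U1 \<inter> set U2 = {}" using IH[OF c2 fin1(2) cut2] by blast
  obtain V1 o1 where V1: "W1 = V1 @ [o1]" "o1 \<in> Ob" "ewalk Fi src dst s (src o1) V1"
    using dec1[OF X(1,2) Obs, of F] W(1) unfolding Fi_def dst1_def by blast
  obtain V2 o2 where V2: "W2 = V2 @ [o2]" "o2 \<in> Ob" "ewalk Fi src dst s (src o2) V2"
    using dec1[OF X(1,2) Obs, of F] W(2) unfolding Fi_def dst1_def by blast
  obtain h1 U1' where U1: "U1 = h1 # U1'" "h1 \<in> Ob" "ewalk Fo src dst (dst h1) t U1'"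
    using dec2'[OF X(1) Obd, of F] U(1) st unfolding Fo_def src2_def by blast
  obtain h2 U2' where U2: "U2 = h2 # U2'" "h2 \<in> Ob" "ewalk Fo src dst (dst h2) t U2'"
    using dec2'[OF X(1) Obd, of F] U(2) st unfolding Fo_def src2_def by blast
  have sV: "set V1 \<subseteq> Fi" "set V2 \<subseteq> Fi" "set U1' \<subseteq> Fo" "set U2' \<subseteq> Fo"
    using V1 V2 U1 U2 by (auto dest: ewalk_set)
  have dis: "Fi \<inter> Fo = {}" "Fi \<inter> Ob = {}" "Fo \<inter> Ob = {}"
    using Obs Obd unfolding Fi_def Fo_def by auto
  have o12: "o1 \<noteq> o2" using W(3) V1 V2 by auto
  have h12: "h1 \<noteq> h2" using U(3) U1 U2 by auto
  have dV: "set V1 \<inter> set V2 = {}" using W(3) V1 V2 by auto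
  have dU: "set U1' \<inter> set U2' = {}" using U(3) U1 U2 by auto
  have FiF: "Fi \<subseteq> F" "Fo \<subseteq> F" using sub1 by auto
  show ?thesis
  proof (cases "o1 = h1")
    case True
    then have "o2 = h2" using o12 h12 V1(2) V2(2) U1(2) U2(2) Ob_def by auto
    have A: "ewalk F src dst s t (V1 @ o1 # U1')" using comb[OF V1(3) _ _ FiF] ObF V1(2) U1(3) True by auto
    have B: "ewalk F src dst s t (V2 @ o2 # U2')" using comb[OF V2(3) _ _ FiF] ObF V2(2) U2(3) \<open>o2 = h2\<close> by auto
    have "set (V1 @ o1 # U1') \<inter> set (V2 @ o2 # U2') = {}"
      using sV dis o12 dV dU V1(2) V2(2) by auto
    then show ?thesis using A B by blast
  next
    case False
    then have e1: "o1 = h2" "o2 = h1" using o12 h12 V1(2) V2(2) U1(2) U2(2) Ob_def by auto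
    have A: "ewalk F src dst s t (V1 @ o1 # U2')" using comb[OF V1(3) _ _ FiF] ObF V1(2) U2(3) e1 by auto
    have B: "ewalk F src dst s t (V2 @ o2 # U1')" using comb[OF V2(3) _ _ FiF] ObF V2(2) U1(3) e1 by auto
    have "set (V1 @ o1 # U2') \<inter> set (V2 @ o2 # U1') = {}"
      using sV dis o12 dV dU V1(2) V2(2) by auto
    then show ?thesis using A B by blast
  qed
qed

lemma star_a:
  assumes cc: "cutc F src dst s t" and X: "s \<in> X" "t \<notin> X"
    and Oeq: "outs F src dst X = {e, f}" and all: "\<forall>g\<in>F. src g \<in> X"
  shows "dst e = t"
proof (rule ccontr)
  assume ne: "dst e \<noteq> t"
  have of: "\<And>g. g \<in> F \<Longrightarrow> src g \<in> X \<Longrightarrow> dst g \<notin> X \<Longrightarrow> g = e \<or> g = f"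
    using Oeq unfolding outs_def by blast
  have "outs F src dst (insert (dst e) X) \<subseteq> {f}"
    using of all unfolding outs_def by auto
  then have "card (outs F src dst (insert (dst e) X)) < 2" by (rule card_le1)
  moreover have "2 \<le> card (outs F src dst (insert (dst e) X))"
    using cc X ne unfolding cutc_def by auto
  ultimately show False by simp
qed

lemma star_b:
  assumes cc: "cutc F src dst s t" and X: "s \<in> X" "t \<notin> X"
    and Oeq: "outs F src dst X = {e, f}" and all: "\<forall>g\<in>F. dst g \<notin> X"
  shows "src e = s"
proof (rule ccontr)
  assume ne: "src e \<noteq> s"
  have of: "\<And>g. g \<in> F \<Longrightarrow> src g \<in> X \<Longrightarrow> dst g \<notin> X \<Longrightarrow> g = e \<or> g = f"
    using Oeq unfolding outs_def by blast
  have "outs F src dst (X - {src e}) \<subseteq> {f}"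
    using of all unfolding outs_def by auto
  then have "card (outs F src dst (X - {src e})) < 2" by (rule card_le1)
  moreover have "2 \<le> card (outs F src dst (X - {src e}))"
    using cc X ne unfolding cutc_def by auto
  ultimately show False by simp
qed

lemma getout:
  assumes cc: "cutc F src dst s t" and st: "s \<noteq> t" and star: "\<forall>g\<in>F. src g = s \<or> dst g = t"
    and S0: "outs F src dst {s} \<subseteq> {e, f}" and x: "dst e \<noteq> t" "dst e \<noteq> s"
  shows "\<exists>h\<in>F. src h = dst e \<and> dst h = t \<and>
     (dst f = dst e \<longrightarrow> (\<exists>h'\<in>F. h' \<noteq> h \<and> src h' = dst e \<and> dst h' = t))"
proof -
  let ?x = "dst e"
  let ?O = "outs F src dst {s, ?x}"
  have c: "2 \<le> card ?O" using cc x st unfolding cutc_def by auto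
  have sub: "\<And>g. g \<in> ?O \<Longrightarrow> (g = f \<and> dst f \<noteq> ?x) \<or> (g \<in> F \<and> src g = ?x \<and> dst g = t)"
  proof -
    fix g assume g: "g \<in> ?O"
    show "(g = f \<and> dst f \<noteq> ?x) \<or> (g \<in> F \<and> src g = ?x \<and> dst g = t)"
    proof (cases "src g = s")
      case True
      then have "g \<in> outs F src dst {s}" using g unfolding outs_def by auto
      then have "g = e \<or> g = f" using S0 by auto
      then show ?thesis using g unfolding outs_def by auto
    next
      case False
      then show ?thesis using g star x unfolding outs_def by auto
    qed
  qed
  obtain a b where ab: "a \<in> ?O" "b \<in> ?O" "a \<noteq> b" using two_elems[OF c] by blast
  show ?thesis
  proof (cases "dst f = ?x")
    case True
    then show ?thesis using sub[OF ab(1)] sub[OF ab(2)] ab(3) by blast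
  next
    case False
    then show ?thesis using sub[OF ab(1)] sub[OF ab(2)] ab(3) by blast
  qed
qed

lemma star_case:
  assumes fin: "finite F" and cc: "cutc F src dst s t" and st: "s \<noteq> t"
    and crit: "\<forall>e\<in>F. \<exists>X f. s \<in> X \<and> t \<notin> X \<and> f \<noteq> e \<and> outs F src dst X = {e, f}"
    and nsplit: "\<forall>e X f. e \<in> F \<longrightarrow> s \<in> X \<longrightarrow> t \<notin> X \<longrightarrow> outs F src dst X = {e, f} \<longrightarrow>
        (\<forall>g\<in>F. src g \<in> X) \<or> (\<forall>g\<in>F. dst g \<notin> X)"
  shows "\<exists>W1 W2. ewalk F src dst s t W1 \<and> ewalk F src dst s t W2 \<and> set W1 \<inter> set W2 = {}"
proof -
  have star: "\<forall>g\<in>F. src g = s \<or> dst g = t"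
  proof
    fix g assume g: "g \<in> F"
    from bspec[OF crit g] obtain X f where X: "s \<in> X" "t \<notin> X" "outs F src dst X = {g, f}" by blast
    have "(\<forall>g\<in>F. src g \<in> X) \<or> (\<forall>g\<in>F. dst g \<notin> X)"
      using nsplit[rule_format, OF g X(1) X(2) X(3)] .
    then show "src g = s \<or> dst g = t"
      using star_a[OF cc X] star_b[OF cc X] by blast
  qed
  define S0 where "S0 = outs F src dst {s}"
  have S0c: "2 \<le> card S0" using cc[unfolded cutc_def, rule_format, of "{s}"] st unfolding S0_def by simp
  show ?thesis
  proof (cases "\<forall>g\<in>S0. dst g = t")
    case True
    obtain g1 g2 where g: "g1 \<in> S0" "g2 \<in> S0" "g1 \<noteq> g2" using two_elems[OF S0c] by blast
    have "g1 \<in> F" "src g1 = s" "g2 \<in> F" "src g2 = s" using g unfolding S0_def outs_def by auto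
    moreover have "dst g1 = t" "dst g2 = t" using g True by auto
    ultimately have "ewalk F src dst s t [g1]" "ewalk F src dst s t [g2]" by auto
    then show ?thesis using g(3) by (intro exI[of _ "[g1]"] exI[of _ "[g2]"]) auto
  next
    case False
    then obtain e where e: "e \<in> S0" "dst e \<noteq> t" by blast
    then have eF: "e \<in> F" "src e = s" "dst e \<noteq> s" unfolding S0_def outs_def by auto
    from bspec[OF crit eF(1)] obtain X f where X: "s \<in> X" "t \<notin> X" "f \<noteq> e" "outs F src dst X = {e, f}" by blast
    have "\<not> (\<forall>g\<in>F. src g \<in> X)" using star_a[OF cc X(1,2,4)] e by blast
    then have alld: "\<forall>g\<in>F. dst g \<notin> X" using nsplit[rule_format, OF eF(1) X(1) X(2) X(4)] by blast
    have of: "\<And>g. g \<in> F \<Longrightarrow> src g \<in> X \<Longrightarrow> dst g \<notin> X \<Longrightarrow> g = e \<or> g = f"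
      using X(4) unfolding outs_def by blast
    have S0sub: "S0 \<subseteq> {e, f}"
    proof
      fix g assume "g \<in> S0"
      then have "g \<in> F" "src g = s" unfolding S0_def outs_def by auto
      then show "g \<in> {e, f}" using of alld X(1) by auto
    qed
    have "f \<in> S0"
    proof (rule ccontr)
      assume "f \<notin> S0"
      then have "S0 \<subseteq> {e}" using S0sub by auto
      from card_le1[OF this] S0c show False by simp
    qed
    then have fF: "f \<in> F" "src f = s" "dst f \<noteq> s" unfolding S0_def outs_def by auto
    obtain h where h: "h \<in> F" "src h = dst e" "dst h = t"
      and h2: "dst f = dst e \<longrightarrow> (\<exists>h'\<in>F. h' \<noteq> h \<and> src h' = dst e \<and> dst h' = t)"
      using getout[OF cc st star S0sub[unfolded S0_def] e(2) eF(3)] by blast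
    have we: "ewalk F src dst s t [e, h]" using eF h by auto
    show ?thesis
    proof (cases "dst f = t")
      case True
      have "ewalk F src dst s t [f]" using fF True by auto
      moreover have "set [e, h] \<inter> set [f] = {}" using X(3) h eF fF by auto
      ultimately show ?thesis using we by blast
    next
      case ft: False
      show ?thesis
      proof (cases "dst f = dst e")
        case True
        then obtain h' where h': "h' \<in> F" "h' \<noteq> h" "src h' = dst e" "dst h' = t" using h2 by blast
        have "ewalk F src dst s t [f, h']" using fF h' True by auto
        moreover have "set [e, h] \<inter> set [f, h'] = {}" using X(3) h h' eF fF by auto
        ultimately show ?thesis using we by blast
      next
        case False
        have S0sub': "outs F src dst {s} \<subseteq> {f, e}" using S0sub S0_def by auto
        obtain k where k: "k \<in> F" "src k = dst f" "dst k = t"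
          using getout[OF cc st star S0sub' ft fF(3)] by blast
        have "ewalk F src dst s t [f, k]" using fF k by auto
        moreover have "set [e, h] \<inter> set [f, k] = {}" using X(3) h k eF fF False by auto
        ultimately show ?thesis using we by blast
      qed
    qed
  qed
qed

theorem menger2:
  fixes F :: "'e set" and src dst :: "'e \<Rightarrow> 'v"
  shows "finite F \<Longrightarrow> cutc F src dst s t \<Longrightarrow>
    \<exists>W1 W2. ewalk F src dst s t W1 \<and> ewalk F src dst s t W2 \<and> set W1 \<inter> set W2 = {}"
proof (induction "card F" arbitrary: F src dst s t rule: less_induct)
  case less
  show ?case
  proof (cases "s = t")
    case True
    then show ?thesis by (intro exI[of _ "[]"]) auto
  next
    case st: False
    show ?thesis
    proof (cases "\<exists>e\<in>F. cutc (F - {e}) src dst s t")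
      case True
      then obtain e where e: "e \<in> F" "cutc (F - {e}) src dst s t" by blast
      have "card (F - {e}) < card F" using e less.prems by (meson card_Diff1_less)
      from less.hyps[OF this _ e(2)] less.prems obtain W1 W2 where
        "ewalk (F - {e}) src dst s t W1" "ewalk (F - {e}) src dst s t W2" "set W1 \<inter> set W2 = {}"
        by auto
      then show ?thesis by (meson Diff_subset ewalk_mono)
    next
      case False
      have crit: "\<forall>e\<in>F. \<exists>X f. s \<in> X \<and> t \<notin> X \<and> f \<noteq> e \<and> outs F src dst X = {e, f}"
        using crit[OF less.prems] False by blast
      show ?thesis
      proof (cases "\<exists>e X f g1 g2. e \<in> F \<and> s \<in> X \<and> t \<notin> X \<and> outs F src dst X = {e, f} \<and>
                       g1 \<in> F \<and> src g1 \<notin> X \<and> g2 \<in> F \<and> dst g2 \<in> X")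
        case True
        then obtain e X f g1 g2 where A: "s \<in> X" "t \<notin> X" "outs F src dst X = {e, f}"
          "g1 \<in> F" "src g1 \<notin> X" "g2 \<in> F" "dst g2 \<in> X" by blast
        show ?thesis
          by (rule split_case[OF less.prems st A]) (use less.hyps in blast)
      next
        case False
        then have "\<forall>e X f. e \<in> F \<longrightarrow> s \<in> X \<longrightarrow> t \<notin> X \<longrightarrow> outs F src dst X = {e, f} \<longrightarrow>
          (\<forall>g\<in>F. src g \<in> X) \<or> (\<forall>g\<in>F. dst g \<notin> X)" by blast
        from star_case[OF less.prems st crit this] show ?thesis .
      qed
    qed
  qed
qed


lemma links_Nil[simp]: "links [] = {}" and links_single[simp]: "links [a] = {}"
  by (auto simp: links_def)

lemma links_Cons2[simp]: "links (a # b # xs) = insert (a, b) (links (b # xs))"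
  by (simp add: links_def)

lemma links_idx: "links xs = {(xs ! n, xs ! Suc n) | n. Suc n < length xs}"
  unfolding links_def set_zip by (auto simp: nth_tl)

lemma links_finite[simp]: "finite (links xs)"
  by (simp add: links_def)

lemma links_take:
  assumes "i < length xs"
  shows "links (take (Suc i) xs) = {(xs ! n, xs ! Suc n) | n. n < i}" (is "?L = ?R")
proof
  show "?L \<subseteq> ?R"
  proof
    fix g assume "g \<in> ?L"
    then obtain n where n: "g = (take (Suc i) xs ! n, take (Suc i) xs ! Suc n)" "Suc n < length (take (Suc i) xs)"
      unfolding links_idx[of "take (Suc i) xs"] by blast
    then have "g = (xs ! n, xs ! Suc n) \<and> n < i" using assms by auto
    then show "g \<in> ?R" by blast
  qed
next
  show "?R \<subseteq> ?L"
  proof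
    fix g assume "g \<in> ?R"
    then obtain n where n: "g = (xs ! n, xs ! Suc n)" "n < i" by blast
    then have "g = (take (Suc i) xs ! n, take (Suc i) xs ! Suc n) \<and> Suc n < length (take (Suc i) xs)"
      using assms by auto
    then show "g \<in> ?L" unfolding links_idx[of "take (Suc i) xs"] by blast
  qed
qed

lemma links_drop:
  assumes "j < length xs"
  shows "links (drop j xs) = {(xs ! n, xs ! Suc n) | n. j \<le> n \<and> Suc n < length xs}" (is "?L = ?R")
proof
  show "?L \<subseteq> ?R"
  proof
    fix g assume "g \<in> ?L"
    then obtain n where n: "g = (drop j xs ! n, drop j xs ! Suc n)" "Suc n < length (drop j xs)"
      unfolding links_idx[of "drop j xs"] by blast
    then have "g = (xs ! (j + n), xs ! Suc (j + n)) \<and> j \<le> j + n \<and> Suc (j + n) < length xs" using assms by auto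
    then show "g \<in> ?R" by blast
  qed
next
  show "?R \<subseteq> ?L"
  proof
    fix g assume "g \<in> ?R"
    then obtain n where n: "g = (xs ! n, xs ! Suc n)" "j \<le> n" "Suc n < length xs" by blast
    then have "g = (drop j xs ! (n - j), drop j xs ! Suc (n - j)) \<and> Suc (n - j) < length (drop j xs)"
      using assms by (auto simp: Suc_diff_le)
    then show "g \<in> ?L" unfolding links_idx[of "drop j xs"] by blast
  qed
qed

lemma links_sub:
  assumes "i \<le> j" "j < length xs"
  shows "links (subpath xs i j) = {(xs ! n, xs ! Suc n) | n. i \<le> n \<and> n < j}" (is "?L = ?R")
proof
  show "?L \<subseteq> ?R"
  proof
    fix g assume "g \<in> ?L"
    then obtain n where n: "g = (subpath xs i j ! n, subpath xs i j ! Suc n)" "Suc n < length (subpath xs i j)"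
      unfolding links_idx[of "subpath xs i j"] by blast
    then have "g = (xs ! (i + n), xs ! Suc (i + n)) \<and> i \<le> i + n \<and> i + n < j" using assms
      by (auto simp: subpath_def)
    then show "g \<in> ?R" by blast
  qed
next
  show "?R \<subseteq> ?L"
  proof
    fix g assume "g \<in> ?R"
    then obtain n where n: "g = (xs ! n, xs ! Suc n)" "i \<le> n" "n < j" by blast
    then have "g = (subpath xs i j ! (n - i), subpath xs i j ! Suc (n - i)) \<and> Suc (n - i) < length (subpath xs i j)"
      using assms by (auto simp: Suc_diff_le subpath_def)
    then show "g \<in> ?L" unfolding links_idx[of "subpath xs i j"] by blast
  qed
qed

lemma path_decomp:
  assumes "i \<le> j" "j < length xs"
  shows "links xs = links (take (Suc i) xs) \<union> links (subpath xs i j) \<union> links (drop j xs)"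
proof -
  have i: "i < length xs" using assms by simp
  show ?thesis
    unfolding links_idx[of xs] links_take[OF i] links_drop[OF assms(2)] links_sub[OF assms]
  proof (intro set_eqI iffI)
    fix g assume "g \<in> {(xs ! n, xs ! Suc n) |n. Suc n < length xs}"
    then obtain n where n: "g = (xs ! n, xs ! Suc n)" "Suc n < length xs" by blast
    show "g \<in> {(xs ! n, xs ! Suc n) |n. n < i} \<union> {(xs ! n, xs ! Suc n) |n. i \<le> n \<and> n < j} \<union>
        {(xs ! n, xs ! Suc n) |n. j \<le> n \<and> Suc n < length xs}"
    proof (cases "n < i")
      case True then show ?thesis using n by blast
    next
      case False
      then show ?thesis
      proof (cases "n < j")
        case True then show ?thesis using n False by auto
      next
        case F2: False then show ?thesis using n False by auto
      qed
    qed
  next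
    fix g assume "g \<in> {(xs ! n, xs ! Suc n) |n. n < i} \<union> {(xs ! n, xs ! Suc n) |n. i \<le> n \<and> n < j} \<union>
        {(xs ! n, xs ! Suc n) |n. j \<le> n \<and> Suc n < length xs}"
    then obtain n where "g = (xs ! n, xs ! Suc n)" "Suc n < length xs" using assms by fastforce
    then show "g \<in> {(xs ! n, xs ! Suc n) |n. Suc n < length xs}" by blast
  qed
qed

lemma nth_pair_inj:
  "distinct xs \<Longrightarrow> Suc n < length xs \<Longrightarrow> Suc m < length xs \<Longrightarrow> (xs ! n, xs ! Suc n) = (xs ! m, xs ! Suc m) \<Longrightarrow> n = m"
  by (simp add: nth_eq_iff_index_eq)

lemma path_disj:
  assumes "distinct xs" "i \<le> j" "j < length xs"
  shows "links (take (Suc i) xs) \<inter> links (subpath xs i j) = {}"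
    "links (drop j xs) \<inter> links (subpath xs i j) = {}"
proof -
  have i: "i < length xs" using assms by simp
  show "links (take (Suc i) xs) \<inter> links (subpath xs i j) = {}"
    unfolding links_take[OF i] links_sub[OF assms(2,3)]
  proof (rule equals0I)
    fix g assume "g \<in> {(xs ! n, xs ! Suc n) |n. n < i} \<inter> {(xs ! n, xs ! Suc n) |n. i \<le> n \<and> n < j}"
    then obtain n m where "g = (xs ! n, xs ! Suc n)" "n < i" "g = (xs ! m, xs ! Suc m)" "i \<le> m" "m < j"
      by blast
    with nth_pair_inj[OF assms(1), of n m] assms show False by auto
  qed
  show "links (drop j xs) \<inter> links (subpath xs i j) = {}"
    unfolding links_drop[OF assms(3)] links_sub[OF assms(2,3)]
  proof (rule equals0I)
    fix g assume "g \<in> {(xs ! n, xs ! Suc n) |n. j \<le> n \<and> Suc n < length xs} \<inter> {(xs ! n, xs ! Suc n) |n. i \<le> n \<and> n < j}"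
    then obtain n m where "g = (xs ! n, xs ! Suc n)" "j \<le> n" "Suc n < length xs" "g = (xs ! m, xs ! Suc m)" "i \<le> m" "m < j"
      by blast
    with nth_pair_inj[OF assms(1), of n m] assms show False by auto
  qed
qed

lemma cross: "P \<noteq> [] \<Longrightarrow> hd P \<in> X \<Longrightarrow> last P \<notin> X \<Longrightarrow> \<exists>g\<in>links P. fst g \<in> X \<and> snd g \<notin> X"
proof (induction P)
  case Nil
  then show ?case by simp
next
  case (Cons a P)
  show ?case
  proof (cases P)
    case Nil
    then show ?thesis using Cons.prems by simp
  next
    case (Cons b P')
    show ?thesis
    proof (cases "b \<in> X")
      case True
      then have "\<exists>g\<in>links P. fst g \<in> X \<and> snd g \<notin> X"
        using Cons.IH Cons.prems Cons by simp
      then show ?thesis using Cons by auto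
    next
      case False
      then show ?thesis using Cons Cons.prems by auto
    qed
  qed
qed

lemma ewalk_links:
  "ewalk F src dst a b W \<Longrightarrow> hd (a # map dst W) = a \<and> last (a # map dst W) = b \<and>
     links (a # map dst W) = (\<lambda>g. (src g, dst g)) ` set W"
proof (induction W arbitrary: a)
  case Nil
  then show ?case by simp
next
  case (Cons g W)
  then have "last (dst g # map dst W) = b \<and> links (dst g # map dst W) = (\<lambda>g. (src g, dst g)) ` set W"
    by simp
  then show ?case using Cons.prems by auto
qed

lemma links_app: "links (as @ b # cs) = links (as @ [b]) \<union> links (b # cs)"
proof (induction as)
  case Nil
  then show ?case by simp
next
  case (Cons a as)
  then show ?case by (cases as) auto
qed

lemma shortcut:
  "P \<noteq> [] \<Longrightarrow> \<exists>Q. Q \<noteq> [] \<and> hd Q = hd P \<and> last Q = last P \<and> distinct Q \<and> links Q \<subseteq> links P"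
proof (induction "length P" arbitrary: P rule: less_induct)
  case less
  show ?case
  proof (cases "distinct P")
    case True
    then show ?thesis using less.prems by blast
  next
    case False
    then obtain as y bs cs where P: "P = as @ [y] @ bs @ [y] @ cs"
      using not_distinct_decomp by blast
    define P' where "P' = as @ y # cs"
    have len: "length P' < length P" using P P'_def by simp
    have ne: "P' \<noteq> []" using P'_def by simp
    have hd: "hd P' = hd P" using P P'_def by (cases as) auto
    have la: "last P' = last P" using P P'_def by (cases cs rule: rev_cases) auto
    have "links P = links (as @ [y]) \<union> links ((y # bs) @ y # cs)"
      using P links_app[of as y "bs @ y # cs"] by simp
    also have "links ((y # bs) @ y # cs) = links ((y # bs) @ [y]) \<union> links (y # cs)"
      by (rule links_app)
    finally have "links P' \<subseteq> links P" using links_app[of as y cs] P'_def by auto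
    with less.hyps[OF len ne] hd la show ?thesis by fastforce
  qed
qed


lemma prod_sub_le:
  fixes f :: "'a \<Rightarrow> real"
  assumes "finite B" "A \<subseteq> B" "\<forall>e\<in>B. 0 \<le> f e \<and> f e \<le> 1"
  shows "prod f B \<le> prod f A"
proof -
  have "prod f B = prod f (B - A) * prod f A" using prod.subset_diff[OF assms(2,1)] .
  moreover have "prod f (B - A) \<le> 1" using assms(3) by (intro prod_le_1) auto
  moreover have "0 \<le> prod f (B - A)" using assms(3) by (intro prod_nonneg) auto
  moreover have "0 \<le> prod f A" using assms(2,3) by (intro prod_nonneg) auto
  ultimately show ?thesis by (simp add: mult_left_le_one_le)
qed

theorem lemma3:
  fixes V :: "'v set" and E :: "('v \<times> 'v) set" and p w :: "'v \<times> 'v \<Rightarrow> real"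
    and pmax S :: real and s t :: 'v and xs ys :: "'v list" and i j k l :: nat
  assumes "network V E p w pmax"
    and "s \<in> V" and "t \<in> V"
    and "S_min E pmax \<le> S" and "S \<le> 1"
    and "co_optimal E p w s t S xs ys"
    and "is_disjoint_segment xs ys i j k l"
  shows "shortest_disjoint_segment E w (xs ! i) (xs ! j) (subpath xs i j) (subpath ys k l)"
proof -
  have net: "pmax < 1" "\<forall>e\<in>E. 0 < p e \<and> p e \<le> pmax" "\<forall>e\<in>E. 0 < w e"
    using assms(1) unfolding network_def by auto
  have seg: "i < j" "j < length xs" "k < l" "l < length ys" "xs ! i = ys ! k" "xs ! j = ys ! l"
    "links (subpath xs i j) \<inter> links ys = {}" "links (subpath ys k l) \<inter> links xs = {}"
    using assms(7) unfolding is_disjoint_segment_def by auto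
  have feas: "co_feasible E p s t S xs ys"
    and opt: "\<And>xs' ys'. co_feasible E p s t S xs' ys' \<Longrightarrow> co_weight w xs ys \<le> co_weight w xs' ys'"
    using assms(6) unfolding co_optimal_def by auto
  have px: "xs \<noteq> []" "hd xs = s" "last xs = t" "distinct xs" "links xs \<subseteq> E"
    and py: "ys \<noteq> []" "hd ys = s" "last ys = t" "distinct ys" "links ys \<subseteq> E"
    and sv: "S \<le> surv_level p xs ys"
    using feas unfolding co_feasible_def is_path_def by auto
  show ?thesis unfolding shortest_disjoint_segment_def
  proof (intro allI impI)
    fix Q1 Q2 assume Q: "is_path E (xs ! i) (xs ! j) Q1 \<and> is_path E (xs ! i) (xs ! j) Q2 \<and> links Q1 \<inter> links Q2 = {}"
    have q1: "Q1 \<noteq> []" "hd Q1 = xs ! i" "last Q1 = xs ! j" "links Q1 \<subseteq> E"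
      and q2: "Q2 \<noteq> []" "hd Q2 = xs ! i" "last Q2 = xs ! j" "links Q2 \<subseteq> E"
      and qd: "links Q1 \<inter> links Q2 = {}"
      using Q unfolding is_path_def by auto
    define Xp where "Xp = take (Suc i) xs"
    define Xs where "Xs = drop j xs"
    define Yp where "Yp = take (Suc k) ys"
    define Ys where "Ys = drop l ys"
    define D1 where "D1 = subpath xs i j"
    define D2 where "D2 = subpath ys k l"
    define R where "R = links Xp \<union> links Xs \<union> links Yp \<union> links Ys"
    define QQ where "QQ = links Q1 \<union> links Q2"
    define N where "N = R \<union> QQ"
    define C where "C = links xs \<inter> links ys"
    have dx: "links xs = links Xp \<union> links D1 \<union> links Xs"
      unfolding Xp_def D1_def Xs_def using path_decomp[of i j xs] seg by simp
    have dy: "links ys = links Yp \<union> links D2 \<union> links Ys"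
      unfolding Yp_def D2_def Ys_def using path_decomp[of k l ys] seg by simp
    have disx: "links Xp \<inter> links D1 = {}" "links Xs \<inter> links D1 = {}"
      unfolding Xp_def D1_def Xs_def using path_disj[of xs i j] seg px by auto
    have disy: "links Yp \<inter> links D2 = {}" "links Ys \<inter> links D2 = {}"
      unfolding Yp_def D2_def Ys_def using path_disj[of ys k l] seg py by auto
    have exp: "Xp \<noteq> []" "hd Xp = s" "last Xp = xs ! i"
      unfolding Xp_def using px seg by (auto simp: hd_conv_nth last_conv_nth)
    have eyp: "Yp \<noteq> []" "hd Yp = s" "last Yp = xs ! i"
      unfolding Yp_def using py seg by (auto simp: hd_conv_nth last_conv_nth)
    have exs: "Xs \<noteq> []" "hd Xs = xs ! j" "last Xs = t"
      unfolding Xs_def using px seg by (auto simp: hd_drop_conv_nth last_drop)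
    have eys: "Ys \<noteq> []" "hd Ys = xs ! j" "last Ys = t"
      unfolding Ys_def using py seg by (auto simp: hd_drop_conv_nth last_drop)
    have finN: "finite N" unfolding N_def R_def QQ_def by simp
    have NE: "N \<subseteq> E" unfolding N_def R_def QQ_def using dx dy px py q1 q2 by auto
    define F where "F = (\<lambda>g. (g, False)) ` N \<union> (\<lambda>g. (g, True)) ` (C \<inter> N)"
    define src where "src = (\<lambda>e::('v \<times> 'v) \<times> bool. fst (fst e))"
    define dst where "dst = (\<lambda>e::('v \<times> 'v) \<times> bool. snd (fst e))"
    have finF: "finite F" unfolding F_def using finN by simp
    have two: "2 \<le> card (outs F src dst X)"
      if "g1 \<in> N" "g2 \<in> N" "fst g1 \<in> X" "snd g1 \<notin> X" "fst g2 \<in> X" "snd g2 \<notin> X" "g1 \<noteq> g2 \<or> g1 \<in> C"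
      for X g1 g2
    proof -
      have fo: "finite (outs F src dst X)" using finF unfolding outs_def by simp
      show ?thesis
      proof (cases "g1 = g2")
        case False
        have "{(g1, False), (g2, False)} \<subseteq> outs F src dst X"
          using that unfolding outs_def F_def src_def dst_def by auto
        from card_mono[OF fo this] False show ?thesis by simp
      next
        case True
        then have "g1 \<in> C" using that by simp
        then have "{(g1, False), (g1, True)} \<subseteq> outs F src dst X"
          using that unfolding outs_def F_def src_def dst_def by auto
        from card_mono[OF fo this] show ?thesis by simp
      qed
    qed
    have cut: "cutc F src dst s t"
      unfolding cutc_def
    proof (intro allI impI)
      fix X assume X: "s \<in> X \<and> t \<notin> X"
      show "2 \<le> card (outs F src dst X)"
      proof (cases "xs ! i \<in> X")
        case False
        obtain g1 where g1: "g1 \<in> links Xp" "fst g1 \<in> X" "snd g1 \<notin> X"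
          using cross[of Xp X] exp X False by auto
        obtain g2 where g2: "g2 \<in> links Yp" "fst g2 \<in> X" "snd g2 \<notin> X"
          using cross[of Yp X] eyp X False by auto
        have "g1 \<noteq> g2 \<or> g1 \<in> C" using g1 g2 dx dy unfolding C_def by auto
        moreover have "g1 \<in> N" "g2 \<in> N" using g1 g2 unfolding N_def R_def by auto
        ultimately show ?thesis using two g1 g2 by blast
      next
        case True
        show ?thesis
        proof (cases "xs ! j \<in> X")
          case False
          obtain g1 where g1: "g1 \<in> links Q1" "fst g1 \<in> X" "snd g1 \<notin> X"
            using cross[of Q1 X] q1 True False by auto
          obtain g2 where g2: "g2 \<in> links Q2" "fst g2 \<in> X" "snd g2 \<notin> X"
            using cross[of Q2 X] q2 True False by auto
          have "g1 \<noteq> g2" using g1 g2 qd by auto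
          moreover have "g1 \<in> N" "g2 \<in> N" using g1 g2 unfolding N_def QQ_def by auto
          ultimately show ?thesis using two g1 g2 by blast
        next
          case T2: True
          obtain g1 where g1: "g1 \<in> links Xs" "fst g1 \<in> X" "snd g1 \<notin> X"
            using cross[of Xs X] exs X T2 by auto
          obtain g2 where g2: "g2 \<in> links Ys" "fst g2 \<in> X" "snd g2 \<notin> X"
            using cross[of Ys X] eys X T2 by auto
          have "g1 \<noteq> g2 \<or> g1 \<in> C" using g1 g2 dx dy unfolding C_def by auto
          moreover have "g1 \<in> N" "g2 \<in> N" using g1 g2 unfolding N_def R_def by auto
          ultimately show ?thesis using two g1 g2 by blast
        qed
      qed
    qed
    obtain W1 W2 where W: "ewalk F src dst s t W1" "ewalk F src dst s t W2" "set W1 \<inter> set W2 = {}"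
      using menger2[OF finF cut] by blast
    have fstsd: "(\<lambda>g. (src g, dst g)) = fst" unfolding src_def dst_def by auto
    have P1: "hd (s # map dst W1) = s" "last (s # map dst W1) = t" "links (s # map dst W1) = fst ` set W1"
      using ewalk_links[OF W(1), unfolded fstsd] by auto
    have P2: "hd (s # map dst W2) = s" "last (s # map dst W2) = t" "links (s # map dst W2) = fst ` set W2"
      using ewalk_links[OF W(2), unfolded fstsd] by auto
    have sW: "set W1 \<subseteq> F" "set W2 \<subseteq> F" using ewalk_set[OF W(1)] ewalk_set[OF W(2)] by auto
    have FN: "fst ` F \<subseteq> N" unfolding F_def by auto
    have shared: "fst ` set W1 \<inter> fst ` set W2 \<subseteq> C"
    proof
      fix g assume "g \<in> fst ` set W1 \<inter> fst ` set W2"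
      then obtain e1 e2 where e: "e1 \<in> set W1" "e2 \<in> set W2" "g = fst e1" "g = fst e2" by auto
      then have "e1 \<noteq> e2" using W(3) by auto
      moreover obtain b1 b2 where "e1 = (g, b1)" "e2 = (g, b2)" using e by (metis prod.collapse)
      ultimately have "(g, True) = e1 \<or> (g, True) = e2" by auto
      then have "(g, True) \<in> F" using e sW by auto
      then show "g \<in> C" unfolding F_def by auto
    qed
    obtain p1 where p1: "p1 \<noteq> []" "hd p1 = s" "last p1 = t" "distinct p1" "links p1 \<subseteq> fst ` set W1"
      using shortcut[of "s # map dst W1"] P1 by auto
    obtain p2 where p2: "p2 \<noteq> []" "hd p2 = s" "last p2 = t" "distinct p2" "links p2 \<subseteq> fst ` set W2"
      using shortcut[of "s # map dst W2"] P2 by auto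
    have p1N: "links p1 \<subseteq> N" using p1(5) image_mono[OF sW(1), of fst] FN by blast
    have p2N: "links p2 \<subseteq> N" using p2(5) image_mono[OF sW(2), of fst] FN by blast
    have p12: "links p1 \<inter> links p2 \<subseteq> C" using p1(5) p2(5) shared by auto
    have CE: "C \<subseteq> E" unfolding C_def using px by auto
    have "surv_level p xs ys \<le> surv_level p p1 p2"
      unfolding surv_level_def C_def[symmetric]
    proof (rule prod_sub_le)
      show "finite C" unfolding C_def by simp
      show "links p1 \<inter> links p2 \<subseteq> C" by (rule p12)
      show "\<forall>e\<in>C. 0 \<le> 1 - p e \<and> 1 - p e \<le> 1" using CE net by fastforce
    qed
    then have "co_feasible E p s t S p1 p2"
      unfolding co_feasible_def is_path_def using p1 p2 p1N p2N NE sv by auto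
    then have le1: "co_weight w xs ys \<le> co_weight w p1 p2" by (rule opt)
    have wN: "\<forall>e\<in>N. 0 \<le> w e" using NE net by fastforce
    have le2: "co_weight w p1 p2 \<le> sum w N"
      unfolding co_weight_def using p1N p2N finN wN by (intro sum_mono2) auto
    have le3: "sum w N \<le> sum w R + sum w QQ"
    proof -
      have "sum w (R \<union> QQ) + sum w (R \<inter> QQ) = sum w R + sum w QQ"
        by (rule sum.union_inter) (simp_all add: R_def QQ_def)
      moreover have "0 \<le> sum w (R \<inter> QQ)" using wN unfolding N_def by (intro sum_nonneg) auto
      ultimately show ?thesis unfolding N_def by linarith
    qed
    have RD: "R \<inter> (links D1 \<union> links D2) = {}"
    proof -
      have a: "links D1 \<inter> links ys = {}" "links D2 \<inter> links xs = {}" using seg(7,8) D1_def D2_def by simp_all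
      have b: "links Yp \<subseteq> links ys" "links Ys \<subseteq> links ys" "links Xp \<subseteq> links xs" "links Xs \<subseteq> links xs"
        using dx dy by blast+
      show ?thesis using disx disy a b unfolding R_def by auto
    qed
    have un: "links xs \<union> links ys = R \<union> (links D1 \<union> links D2)"
      using dx dy unfolding R_def by blast
    have eq: "co_weight w xs ys = sum w R + sum w (links D1 \<union> links D2)"
    proof -
      have finR: "finite R" unfolding R_def by simp
      show ?thesis unfolding co_weight_def un by (rule sum.union_disjoint) (simp_all add: finR RD)
    qed
    from le1 le2 le3 eq have "sum w (links D1 \<union> links D2) \<le> sum w QQ" by linarith
    then show "(\<Sum>e\<in>links (subpath xs i j) \<union> links (subpath ys k l). w e) \<le> (\<Sum>e\<in>links Q1 \<union> links Q2. w e)"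
      unfolding D1_def D2_def QQ_def by simp
  qed
qed

end
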